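(* Let $\omega_N$ be the vorticity of the SV approximation, with arbitrary parameters $\epsilon_N,m_N,a_N>0$. Let $C>0$ be a constant such that $\sum_{0<|k|\le N}|k|^{-2}\le C\log(N)$ for all $N\ge2$ (sum over $k\in\mathbb{Z}^2$). For $\alpha>0$ put \[ \beta_N=\alpha^2+8\epsilon_N^2m_N^2,\qquad \gamma_N=C\log(N). \] Then \[ \|e^{\alpha t|\nabla|}\omega_N(\cdot,t)\|_{L^2}^2\le\frac{\|\omega_N(\cdot,0)\|_{L^2}^2\,e^{\beta_Nt/\epsilon_N}}{1-\frac{\gamma_N\|\omega_N(\cdot,0)\|_{L^2}^2}{\beta_N}\big[e^{\beta_Nt/\epsilon_N}-1\big]} \] for all $0\le t<t^*$, where $t^*=\frac{\epsilon_N}{\beta_N}\log\Big(1+\frac{\beta_N}{\gamma_N\|\omega_N(\cdot,0)\|_{L^2}^2}\Big)$.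
   Context: Let $\mathbb{T}^2=\mathbb{R}^2/(2\pi\mathbb{Z})^2$. For $k=(k_1,k_2)\in\mathbb{Z}^2$ let $|k|$ denote the Euclidean norm and $|k|_\infty=\max(|k_1|,|k_2|)$. Fourier coefficients are $\hat f_k=(2\pi)^{-2}\int_{\mathbb{T}^2}f(x)e^{-ik\cdot x}\,dx$. $P_Nf:=\sum_{|k|_\infty\le N}\hat f_k e^{ik\cdot x}$. Convolution is $(K*f)(x)=\int_{\mathbb{T}^2}K(x-y)f(y)\,dy$, so $\widehat{(K*f)}_k=\widetilde K_k\hat f_k$ with $\widetilde K_k:=\int_{\mathbb{T}^2}K(x)e^{-ik\cdot x}dx$. $|\nabla|$ and $e^{\alpha|\nabla|}$ ($\alpha\in\mathbb{R}$) are the Fourier multipliers with symbols $|k|$ and $e^{\alpha|k|}$. For $v=(v^1,v^2)$, $\mathrm{curl}\,v=\partial_1v^2-\partial_2v^1$. Initial data: $u_0\in L^2(\mathbb{T}^2;\mathbb{R}^2)$ with $\operatorname{div}u_0=0$ in distributions and $\int u_0\,dx=0$; $\omega_0:=\mathrm{curl}\,u_0\in H^{-1}(\mathbb{T}^2)$. SV scheme: for integers $N\ge2$ fix parameters $\epsilon_N>0$, $m_N\ge0$, $1\le a_N\le N$, and: numbers $\hat R_k\in[0,1]$ with $\hat R_k=1$ for $|k|\le m_N$, $\hat R_k=0$ for $|k|>2m_N$; $R_{m_N}$ is the trigonometric polynomial with $\widetilde{(R_{m_N})}_k=\hat R_k$, and $Q_N$ is the Fourier multiplier with symbol $\hat Q_k:=1-\hat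 R_k$; $K_{a_N}$ is a trigonometric polynomial with $\widetilde{(K_{a_N})}_k=0$ unless $|k|_\infty\le a_N$ and $|\widetilde{(K_{a_N})}_k|\le1$. The SV approximation is the trigonometric polynomial field $u_N(x,t)=\sum_{0<|k|_\infty\le N}\hat u_k(t)e^{ik\cdot x}$, $k\cdot\hat u_k=0$, solving $\partial_tu_N+P_N(u_N\cdot\nabla u_N)+\nabla p_N=\epsilon_N\Delta(Q_Nu_N)$, $\operatorname{div}u_N=0$, $u_N(\cdot,0)=K_{a_N}*u_0$. Its vorticity $\omega_N:=\mathrm{curl}\,u_N$ solves $\partial_t\omega_N+P_N(u_N\cdot\nabla\omega_N)=\epsilon_N\Delta(Q_N\omega_N)$, $\omega_N(\cdot,0)=K_{a_N}*\omega_0$. *)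

theory Defs
  imports "HOL-Analysis.Analysis"
begin

text \<open>Lattice points k = (k1,k2) are elements of int \<times> int; points of the torus
 are represented by (x1,x2) :: real \<times> real, with functions on the torus given as
 2 pi-periodic functions; integrals over the torus are integrals over the
 fundamental square with Lebesgue measure.\<close>

definition kinf :: "int \<times> int \<Rightarrow> int" where
  "kinf k = max \<bar>fst k\<bar> \<bar>snd k\<bar>"

definition knorm :: "int \<times> int \<Rightarrow> real" where
  "knorm k = sqrt ((of_int (fst k))\<^sup>2 + (of_int (snd k))\<^sup>2)"

definition box :: "nat \<Rightarrow> (int \<times> int) set" where
  "box N = {- int N .. int N} \<times> {- int N .. int N}"

definition torus_sq :: "(real \<times> real) set" where
  "torus_sq = {0..2*pi} \<times> {0..2*pi}"

definition cexpk :: "int \<times> int \<Rightarrow> real \<times> real \<Rightarrow> complex" where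
  "cexpk k x = exp (\<i> * of_real (of_int (fst k) * fst x + of_int (snd k) * snd x))"

definition fcoeff :: "(real \<times> real \<Rightarrow> complex) \<Rightarrow> int \<times> int \<Rightarrow> complex" where
  "fcoeff f k = (LINT x:torus_sq|lborel. f x * cnj (cexpk k x)) / of_real ((2*pi)\<^sup>2)"

definition L2sq :: "(real \<times> real \<Rightarrow> complex) \<Rightarrow> real" where
  "L2sq f = (LINT x:torus_sq|lborel. (cmod (f x))\<^sup>2)"

definition trigpoly :: "nat \<Rightarrow> (int \<times> int \<Rightarrow> complex) \<Rightarrow> real \<times> real \<Rightarrow> complex" where
  "trigpoly N c x = (\<Sum>k\<in>box N. c k * cexpk k x)"

text \<open>Fourier coefficient of curl v = d1 v2 - d2 v1 at mode k, given the
 coefficient vector v of v at mode k.\<close>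
definition curl_coeff :: "int \<times> int \<Rightarrow> complex \<times> complex \<Rightarrow> complex" where
  "curl_coeff k v = \<i> * (of_int (fst k) * snd v - of_int (snd k) * fst v)"

definition vcoeff :: "(real \<times> real \<Rightarrow> real \<times> real) \<Rightarrow> int \<times> int \<Rightarrow> complex \<times> complex" where
  "vcoeff u k = (fcoeff (\<lambda>x. of_real (fst (u x))) k, fcoeff (\<lambda>x. of_real (snd (u x))) k)"

text \<open>Admissible initial data: u0 in L2(T^2;R^2) (a 2pi-periodic, measurable,
 square integrable field), divergence free in distributions (equivalently
 k . (u0)^_k = 0 for all k) and of mean zero.\<close>
definition admissible_initial :: "(real \<times> real \<Rightarrow> real \<times> real) \<Rightarrow> bool" where
  "admissible_initial u0 \<longleftrightarrow>
     (\<forall>x1 x2. u0 (x1 + 2*pi, x2) = u0 (x1, x2) \<and> u0 (x1, x2 + 2*pi) = u0 (x1, x2)) \<and>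
     (\<lambda>x. fst (u0 x)) \<in> borel_measurable lborel \<and>
     (\<lambda>x. snd (u0 x)) \<in> borel_measurable lborel \<and>
     set_integrable lborel torus_sq (\<lambda>x. (fst (u0 x))\<^sup>2) \<and>
     set_integrable lborel torus_sq (\<lambda>x. (snd (u0 x))\<^sup>2) \<and>
     (\<forall>k. of_int (fst k) * fst (vcoeff u0 k) + of_int (snd k) * snd (vcoeff u0 k) = 0) \<and>
     (LINT x:torus_sq|lborel. fst (u0 x)) = 0 \<and>
     (LINT x:torus_sq|lborel. snd (u0 x)) = 0"

text \<open>Fourier coefficient at mode k of  u . grad u  for the field with
 coefficients uh (supported in box N):  sum over p + q = k of (uh p . i q) uh q.\<close>
definition convec :: "nat \<Rightarrow> (int \<times> int \<Rightarrow> complex \<times> complex) \<Rightarrow> int \<times> int \<Rightarrow> complex \<times> complex" where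
  "convec N uh k = (\<Sum>q\<in>box N.
      let p = uh (k - q);
          s = fst p * (\<i> * of_int (fst q)) + snd p * (\<i> * of_int (snd q))
      in (s * fst (uh q), s * snd (uh q)))"

text \<open>The SV approximation u_N, given by its Fourier coefficients uh t k
 (real-valued field, divergence free, supported in 0 < |k|_inf \<le> N), solving
 d/dt u_N + P_N(u_N . grad u_N) + grad p_N = eps Laplace(Q_N u_N), with
 u_N(.,0) = K * u0, for all times t \<ge> 0.  Rh k is the symbol of R_m (so Q_N has
 symbol 1 - Rh k), Kt k = the coefficient of K.\<close>
definition SV_solution ::
  "nat \<Rightarrow> real \<Rightarrow> (int \<times> int \<Rightarrow> real) \<Rightarrow> (int \<times> int \<Rightarrow> complex) \<Rightarrow>
   (real \<times> real \<Rightarrow> real \<times> real) \<Rightarrow> (real \<Rightarrow> int \<times> int \<Rightarrow> complex \<times> complex) \<Rightarrow> bool" where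
  "SV_solution N eps Rh Kt u0 uh \<longleftrightarrow>
     (\<forall>t\<ge>0. \<forall>k. (k = 0 \<or> k \<notin> box N) \<longrightarrow> uh t k = 0) \<and>
     (\<forall>t\<ge>0. \<forall>k. of_int (fst k) * fst (uh t k) + of_int (snd k) * snd (uh t k) = 0) \<and>
     (\<forall>t\<ge>0. \<forall>k. uh t (- k) = (cnj (fst (uh t k)), cnj (snd (uh t k)))) \<and>
     (\<forall>k. uh 0 k = (Kt k * fst (vcoeff u0 k), Kt k * snd (vcoeff u0 k))) \<and>
     (\<exists>pr :: real \<Rightarrow> int \<times> int \<Rightarrow> complex.
        (\<forall>t\<ge>0. \<forall>k. pr t (- k) = cnj (pr t k)) \<and>
        (\<forall>t\<ge>0. \<forall>k.
           ((\<lambda>s. uh s k) has_vector_derivative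
              (- (if k \<in> box N then convec N (uh t) k else 0)
               - (\<i> * of_int (fst k) * pr t k, \<i> * of_int (snd k) * pr t k)
               + (of_real (- eps * (knorm k)\<^sup>2 * (1 - Rh k)) * fst (uh t k),
                  of_real (- eps * (knorm k)\<^sup>2 * (1 - Rh k)) * snd (uh t k))))
             (at t within {0..})))"

definition vorticity :: "nat \<Rightarrow> (real \<Rightarrow> int \<times> int \<Rightarrow> complex \<times> complex) \<Rightarrow> real \<Rightarrow> real \<times> real \<Rightarrow> complex" where
  "vorticity N uh t = trigpoly N (\<lambda>k. curl_coeff k (uh t k))"

definition exp_weighted_vorticity ::
  "nat \<Rightarrow> real \<Rightarrow> (real \<Rightarrow> int \<times> int \<Rightarrow> complex \<times> complex) \<Rightarrow> real \<Rightarrow> real \<times> real \<Rightarrow> complex" where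
  "exp_weighted_vorticity N alpha uh t =
     trigpoly N (\<lambda>k. of_real (exp (alpha * t * knorm k)) * curl_coeff k (uh t k))"

end

theory Submission
  imports Defs
begin



lemma cexpk_mult: "cexpk k x * cnj (cexpk l x) = cexpk (k - l) x"
  unfolding cexpk_def exp_cnj
  by (simp add: exp_add[symmetric] algebra_simps)

lemma int_exp_1d:
  fixes n :: int
  shows "((\<lambda>y::real. exp (\<i> * of_real (of_int n * y))) has_integral
            (if n = 0 then of_real (2*pi) else 0)) {0..2*pi}"
proof (cases "n = 0")
  case True
  then show ?thesis using has_integral_const_real[of "1::complex" 0 "2*pi"]
    by (simp add: scaleR_conv_of_real)
next
  case False
  define f where "f = (\<lambda>y::real. exp (\<i> * of_real (of_int n * y)) / (\<i> * of_int n))"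
  have d: "(f has_vector_derivative exp (\<i> * of_real (of_int n * y))) (at y within {0..2*pi})" for y
  proof -
    have "((\<lambda>z::complex. exp (\<i> * (of_int n * z)) / (\<i> * of_int n)) has_field_derivative
             exp (\<i> * (of_int n * of_real y))) (at (of_real y))"
      using False by (auto intro!: derivative_eq_intros simp: field_simps)
    from has_vector_derivative_real_field[OF this, where s="{0..2*pi}"]
    show ?thesis unfolding f_def by simp
  qed
  have "((\<lambda>y. exp (\<i> * of_real (of_int n * y))) has_integral (f (2*pi) - f 0)) {0..2*pi}"
    using fundamental_theorem_of_calculus[of 0 "2*pi" f] d by auto
  moreover have "exp (\<i> * complex_of_real (real_of_int n * (2 * pi))) = 1"
  proof -
    have e: "\<i> * complex_of_real (real_of_int n * (2 * pi)) = (2 * of_int n * pi) * \<i>"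
      by (simp add: algebra_simps)
    show ?thesis unfolding e by (rule exp_integer_2pi) simp
  qed
  ultimately show ?thesis using False by (simp add: f_def)
qed

lemma torus_cbox: "torus_sq = cbox (0,0) (2*pi, 2*pi)"
  unfolding torus_sq_def cbox_Pair_eq by (simp add: cbox_interval)

lemma cexpk_cont: "continuous_on S (cexpk j)"
  unfolding cexpk_def by (intro continuous_intros)

lemma cexpk_integral:
  "(cexpk j has_integral (if j = 0 then of_real (4*pi^2) else 0)) torus_sq"
proof -
  let ?I = "\<lambda>n::int. (if n = 0 then complex_of_real (2*pi) else 0)"
  have int: "cexpk j integrable_on torus_sq"
    unfolding torus_cbox by (intro integrable_continuous cexpk_cont)
  have sp: "cexpk j (x, y) = exp (\<i> * of_real (of_int (fst j) * x)) * exp (\<i> * of_real (of_int (snd j) * y))" for x y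
    unfolding cexpk_def by (simp add: exp_add[symmetric] algebra_simps)
  have "integral torus_sq (cexpk j) = integral (cbox 0 (2*pi)) (\<lambda>x. integral (cbox 0 (2*pi)) (\<lambda>y. cexpk j (x, y)))"
    unfolding torus_cbox by (intro integral_prod_continuous cexpk_cont)
  also have "\<dots> = integral {0..2*pi} (\<lambda>x. exp (\<i> * of_real (of_int (fst j) * x)) * ?I (snd j))"
    unfolding cbox_interval sp integral_mult_right
    using int_exp_1d[of "snd j"] by (simp add: integral_unique)
  also have "\<dots> = ?I (fst j) * ?I (snd j)"
    unfolding integral_mult_left
    using int_exp_1d[of "fst j"] by (simp add: integral_unique)
  also have "\<dots> = (if j = 0 then of_real (4*pi^2) else 0)"
    by (cases j) (auto simp: power2_eq_square zero_prod_def)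
  finally show ?thesis using int by (simp add: has_integral_integral)
qed

lemma trigpoly_cont: "continuous_on S (trigpoly N c)"
  unfolding trigpoly_def by (intro continuous_intros cexpk_cont)

lemma finite_box: "finite (box N)"
  unfolding box_def by simp

lemma L2sq_cont:
  assumes "continuous_on torus_sq f"
  shows "L2sq f = integral torus_sq (\<lambda>x. (cmod (f x))^2)"
proof -
  have "compact torus_sq" unfolding torus_sq_def by (intro compact_Times compact_Icc)
  moreover have "continuous_on torus_sq (\<lambda>x. (cmod (f x))^2)"
    by (intro continuous_intros assms)
  ultimately have "set_integrable lborel torus_sq (\<lambda>x. (cmod (f x))^2)"
    unfolding set_integrable_def by (rule borel_integrable_compact)
  then show ?thesis unfolding L2sq_def by (rule set_borel_integral_eq_integral)
qed

lemma L2sq_trigpoly: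
  "L2sq (trigpoly N c) = 4*pi^2 * (\<Sum>k\<in>box N. (cmod (c k))^2)"
proof -
  let ?g = "\<lambda>x. \<Sum>k\<in>box N. \<Sum>l\<in>box N. c k * cnj (c l) * cexpk (k - l) x"
  have hg: "(?g has_integral (\<Sum>k\<in>box N. \<Sum>l\<in>box N. c k * cnj (c l) * (if k - l = 0 then of_real (4*pi^2) else 0))) torus_sq"
    by (intro has_integral_sum finite_box has_integral_mult_right cexpk_integral)
  have "(\<Sum>k\<in>box N. \<Sum>l\<in>box N. c k * cnj (c l) * (if k - l = 0 then complex_of_real (4*pi^2) else 0))
      = (\<Sum>k\<in>box N. c k * cnj (c k) * of_real (4*pi^2))"
  proof (rule sum.cong[OF refl])
    fix k assume k: "k \<in> box N"
    have "(\<Sum>l\<in>box N. c k * cnj (c l) * (if k - l = 0 then complex_of_real (4*pi^2) else 0))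
        = (\<Sum>l\<in>box N. if k = l then c k * cnj (c l) * complex_of_real (4*pi^2) else 0)"
      by (rule sum.cong) auto
    also have "\<dots> = c k * cnj (c k) * of_real (4*pi^2)"
      using k finite_box by (simp add: sum.delta)
    finally show "(\<Sum>l\<in>box N. c k * cnj (c l) * (if k - l = 0 then complex_of_real (4*pi^2) else 0))
        = c k * cnj (c k) * of_real (4*pi^2)" .
  qed
  also have "\<dots> = (\<Sum>k\<in>box N. complex_of_real (4*pi^2 * (cmod (c k))^2))"
    by (rule sum.cong[OF refl]) (simp only: of_real_mult complex_norm_square ac_simps)
  also have "\<dots> = of_real (4*pi^2 * (\<Sum>k\<in>box N. (cmod (c k))^2))"
    by (simp only: of_real_sum sum_distrib_left)
  finally have hg2: "(?g has_integral of_real (4*pi^2 * (\<Sum>k\<in>box N. (cmod (c k))^2))) torus_sq"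
    using hg by simp
  have "((Re \<circ> ?g) has_integral Re (of_real (4*pi^2 * (\<Sum>k\<in>box N. (cmod (c k))^2)))) torus_sq"
    by (rule has_integral_linear[OF hg2 bounded_linear_Re])
  moreover have "(Re \<circ> ?g) = (\<lambda>x. (cmod (trigpoly N c x))^2)"
  proof
    fix x
    have "trigpoly N c x * cnj (trigpoly N c x) = ?g x"
      unfolding trigpoly_def cnj_sum sum_product
      by (intro sum.cong refl) (simp add: cexpk_mult[symmetric] algebra_simps)
    then have "of_real ((cmod (trigpoly N c x))^2) = ?g x"
      by (simp only: complex_norm_square)
    then show "(Re \<circ> ?g) x = (cmod (trigpoly N c x))^2"
      by (metis Re_complex_of_real comp_apply)
  qed
  ultimately show ?thesis
    using L2sq_cont[OF trigpoly_cont] by (simp add: integral_unique)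
qed




lemma riccati_comp:
  fixes E E' :: "real \<Rightarrow> real" and a b t :: real
  assumes der: "\<And>t. t \<ge> 0 \<Longrightarrow> (E has_real_derivative E' t) (at t within {0..})"
    and ineq: "\<And>t. t \<ge> 0 \<Longrightarrow> E' t \<le> a * E t + b * (E t)^2"
    and pos: "\<And>t. t \<ge> 0 \<Longrightarrow> E t \<ge> 0"
    and a: "a > 0" and b: "b \<ge> 0" and t: "t \<ge> 0"
  shows "E t * (1 - b / a * E 0 * (exp (a * t) - 1)) \<le> E 0 * exp (a * t)"
proof -
  define c where "c = b / a * E 0"
  define DD where "DD = (\<lambda>s. 1 - c * (exp (a * s) - 1))"
  define P where "P = (\<lambda>s. E s * DD s - E 0 * exp (a * s))"
  have c0: "c \<ge> 0" using a b pos[of 0] by (simp add: c_def)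
  have ca: "c * a = b * E 0" using a by (simp add: c_def)
  show ?thesis
  proof (cases "DD t \<ge> 0")
    case False
    then have "E t * DD t \<le> 0" using pos[OF t] by (simp add: mult_nonneg_nonpos)
    also have "0 \<le> E 0 * exp (a * t)" using pos[of 0] by simp
    finally show ?thesis by (simp add: DD_def c_def)
  next
    case True
    have Dpos: "DD s \<ge> 0" if "s \<le> t" for s
    proof -
      have "exp (a * s) \<le> exp (a * t)" using that a by simp
      then have "c * (exp (a * s) - 1) \<le> c * (exp (a * t) - 1)" using c0 by (simp add: mult_left_mono)
      then show ?thesis using True by (simp add: DD_def)
    qed
    define P' where "P' = (\<lambda>s. E' s * DD s + E s * (- c * (a * exp (a * s))) - E 0 * (a * exp (a * s)))"
    have dP: "(P has_real_derivative P' s) (at s within {0..})" if "s \<ge> 0" for s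
      unfolding P_def DD_def P'_def
      by (rule derivative_eq_intros der[OF that] refl | simp)+
    have dPle: "P' s \<le> (a + b * E s) * P s" if "0 \<le> s" "s \<le> t" for s
    proof -
      have "E' s * DD s \<le> (a * E s + b * (E s)^2) * DD s"
        using ineq[OF that(1)] Dpos[OF that(2)] by (rule mult_right_mono)
      then have i1: "E' s * DD s \<le> a * E s * DD s + b * (E s)^2 * DD s"
        by (simp add: algebra_simps)
      have i2: "P' s = E' s * DD s - (c * a) * E s * exp (a * s) - a * E 0 * exp (a * s)"
        unfolding P'_def by (simp add: algebra_simps)
      have i3: "(a + b * E s) * P s = a * E s * DD s + b * (E s)^2 * DD s - a * E 0 * exp (a * s) - b * E 0 * E s * exp (a * s)"
        unfolding P_def by (simp add: algebra_simps power2_eq_square)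
      have i4: "(c * a) * E s * exp (a * s) = b * E 0 * E s * exp (a * s)" using ca by simp
      show ?thesis using i1 i2 i3 i4 by linarith
    qed
    have contP: "continuous_on {0..t} P"
    proof -
      have "continuous (at s within {0..t}) P" if "s \<in> {0..t}" for s
      proof -
        have "continuous (at s within {0..}) P"
          using dP[of s] that by (auto intro: DERIV_continuous)
        then show ?thesis by (rule continuous_within_subset) auto
      qed
      then show ?thesis by (simp add: continuous_on_eq_continuous_within)
    qed
    have contE: "continuous_on {0..t} E"
    proof -
      have "continuous (at s within {0..t}) E" if "s \<in> {0..t}" for s
      proof -
        have "continuous (at s within {0..}) E"
          using der[of s] that by (auto intro: DERIV_continuous)
        then show ?thesis by (rule continuous_within_subset) auto
      qed
      then show ?thesis by (simp add: continuous_on_eq_continuous_within)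
    qed
    obtain M where M: "\<And>s. s \<in> {0..t} \<Longrightarrow> a + b * E s \<le> M"
    proof -
      have "compact ((\<lambda>s. a + b * E s) ` {0..t})"
        by (intro compact_continuous_image continuous_intros contE compact_Icc)
      then obtain M where "\<forall>x\<in>(\<lambda>s. a + b * E s) ` {0..t}. norm x \<le> M"
        using compact_imp_bounded bounded_iff by metis
      note M' = this
      show ?thesis
      proof (rule that[of M])
        fix s assume "s \<in> {0..t}"
        then have "norm (a + b * E s) \<le> M" using M' by blast
        then show "a + b * E s \<le> M" by simp
      qed
    qed
    have P0: "P 0 = 0" by (simp add: P_def DD_def)
    have "P t \<le> 0"
    proof (rule ccontr)
      assume Pt: "\<not> P t \<le> 0"
      define T where "T = {0..t} \<inter> P -` {..0}"
      have clT: "closed T" unfolding T_def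
        by (intro continuous_closed_preimage contP closed_atLeastAtMost closed_atMost)
      have T0: "0 \<in> T" using t P0 by (simp add: T_def)
      have bT: "bdd_above T" unfolding T_def by (rule bdd_aboveI[of _ t]) auto
      define s0 where "s0 = Sup T"
      have s0T: "s0 \<in> T" unfolding s0_def using clT T0 bT closed_contains_Sup by blast
      then have s0: "0 \<le> s0" "s0 \<le> t" "P s0 \<le> 0" by (auto simp: T_def)
      have s0t: "s0 < t" using s0 Pt by (cases "s0 = t") auto
      have Ppos: "P s > 0" if "s0 < s" "s \<le> t" for s
      proof (rule ccontr)
        assume "\<not> P s > 0"
        then have "s \<in> T" using that s0 by (auto simp: T_def)
        then have "s \<le> s0" unfolding s0_def using bT by (rule cSup_upper)
        then show False using that by simp
      qed
      define Q where "Q = (\<lambda>s. P s * exp (- M * s))"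
      have "Q t \<le> Q s0"
      proof (rule DERIV_nonpos_imp_decreasing_open[of s0 t Q])
        show "s0 \<le> t" using s0t by simp
        show "continuous_on {s0..t} Q" unfolding Q_def
          using contP s0 by (auto intro!: continuous_intros elim: continuous_on_subset)
      next
        fix x assume x: "s0 < x" "x < t"
        have x0: "x > 0" using x s0 by simp
        have "at x within {0..} = at x"
          using x0 by (intro at_within_interior) simp
        then have dPx: "(P has_real_derivative P' x) (at x)" using dP[of x] x0 by simp
        have "(Q has_real_derivative (P' x * exp (- M * x) + P x * (exp (- M * x) * (- M)))) (at x)"
          unfolding Q_def by (rule derivative_eq_intros dPx refl | simp)+
        moreover have "P' x * exp (- M * x) + P x * (exp (- M * x) * (- M)) \<le> 0"
        proof -
          have "P' x \<le> (a + b * E x) * P x" using dPle[of x] x x0 by simp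
          also have "\<dots> \<le> M * P x"
            using M[of x] x x0 Ppos[of x] by (intro mult_right_mono) auto
          finally have "P' x - M * P x \<le> 0" by simp
          then have "(P' x - M * P x) * exp (- M * x) \<le> 0" by (simp add: mult_nonpos_nonneg)
          then show ?thesis by (simp add: algebra_simps)
        qed
        ultimately show "\<exists>y. (Q has_real_derivative y) (at x) \<and> y \<le> 0" by blast
      qed
      moreover have "Q s0 \<le> 0" using s0 by (simp add: Q_def mult_nonpos_nonneg)
      moreover have "Q t > 0" using Pt by (simp add: Q_def)
      ultimately show False by simp
    qed
    then show ?thesis by (simp add: P_def DD_def c_def)
  qed
qed




definition vnorm :: "complex \<times> complex \<Rightarrow> real" where
  "vnorm v = sqrt ((cmod (fst v))^2 + (cmod (snd v))^2)"

definition sconv :: "(int \<times> int \<Rightarrow> complex \<times> complex) \<Rightarrow> int \<times> int \<Rightarrow> int \<times> int \<Rightarrow> complex" where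
  "sconv u k q = fst (u (k - q)) * (\<i> * of_int (fst q)) + snd (u (k - q)) * (\<i> * of_int (snd q))"

lemma curl_coeff_sum: "curl_coeff k (\<Sum>q\<in>A. (f q, g q)) = (\<Sum>q\<in>A. curl_coeff k (f q, g q))"
  by (induction A rule: infinite_finite_induct) (simp_all add: curl_coeff_def algebra_simps)

lemma curl_split: "curl_coeff k v = curl_coeff (k - q) v + curl_coeff q v"
  by (simp add: curl_coeff_def algebra_simps)

lemma conv_curl_raw:
  "curl_coeff k (convec N u k) = (\<Sum>q\<in>box N. sconv u k q * curl_coeff k (u q))"
proof -
  have "convec N u k = (\<Sum>q\<in>box N. (sconv u k q * fst (u q), sconv u k q * snd (u q)))"
    unfolding convec_def sconv_def Let_def by simp
  then show ?thesis
    by (simp add: curl_coeff_sum) (simp add: curl_coeff_def algebra_simps)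
qed

lemma pair_cancel:
  fixes a1 a2 b1 b2 p1 p2 q1 q2 :: complex
  assumes "p1*a1 + p2*a2 = 0" "q1*b1 + q2*b2 = 0"
  shows "(a1*(\<i>*q1) + a2*(\<i>*q2)) * (\<i>*(p1*b2 - p2*b1)) + (b1*(\<i>*p1) + b2*(\<i>*p2)) * (\<i>*(q1*a2 - q2*a1)) = 0"
proof -
  have "(a1*(\<i>*q1) + a2*(\<i>*q2)) * (\<i>*(p1*b2 - p2*b1)) + (b1*(\<i>*p1) + b2*(\<i>*p2)) * (\<i>*(q1*a2 - q2*a1))
     = (\<i>*\<i>) * ((p1*a1+p2*a2)*(q1*b2-q2*b1) + (q1*b1+q2*b2)*(p1*a2-p2*a1))"
    by algebra
  then show ?thesis using assms by simp
qed

lemma conv_cancel: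
  assumes supp: "\<And>k. k \<notin> box N \<Longrightarrow> u k = 0"
    and div: "\<And>k. of_int (fst k) * fst (u k) + of_int (snd k) * snd (u k) = 0"
  shows "(\<Sum>q\<in>box N. sconv u k q * curl_coeff (k - q) (u q)) = 0"
proof -
  define f where "f q = sconv u k q * curl_coeff (k - q) (u q)" for q
  define A where "A = {q\<in>box N. k - q \<in> box N}"
  have "sum f (box N) = sum f A"
  proof (rule sum.mono_neutral_right[OF finite_box])
    show "A \<subseteq> box N" by (auto simp: A_def)
    show "\<forall>i\<in>box N - A. f i = 0" by (auto simp: A_def f_def sconv_def supp)
  qed
  moreover have bij: "bij_betw (\<lambda>q. k - q) A A"
    by (rule bij_betwI[where g="\<lambda>q. k - q"]) (auto simp: A_def)
  have "sum (\<lambda>q. f (k - q)) A = sum f A"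
    using sum.reindex_bij_betw[OF bij, of f] by simp
  moreover have "f q + f (k - q) = 0" for q
  proof -
    have "f q + f (k - q) =
      (fst (u (k-q))*(\<i>* of_int (fst q)) + snd (u (k-q))*(\<i>* of_int (snd q))) *
         (\<i>*(of_int (fst (k-q))* snd (u q) - of_int (snd (k-q))* fst (u q)))
      + (fst (u q)*(\<i>* of_int (fst (k-q))) + snd (u q)*(\<i>* of_int (snd (k-q)))) *
         (\<i>*(of_int (fst q)* snd (u (k-q)) - of_int (snd q)* fst (u (k-q))))"
    proof -
      have kk: "k - (k - q) = q" by simp
      show ?thesis by (simp only: f_def sconv_def curl_coeff_def kk)
    qed
    also have "\<dots> = 0"
      by (rule pair_cancel[OF div[of "k-q"] div[of q]])
    finally show ?thesis .
  qed
  then have "sum f A + sum (\<lambda>q. f (k - q)) A = 0"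
    by (simp add: sum.distrib[symmetric])
  ultimately show ?thesis by (simp add: f_def)
qed

lemma conv_curl:
  assumes supp: "\<And>k. k \<notin> box N \<Longrightarrow> u k = 0"
    and div: "\<And>k. of_int (fst k) * fst (u k) + of_int (snd k) * snd (u k) = 0"
  shows "curl_coeff k (convec N u k) = (\<Sum>q\<in>box N. sconv u k q * curl_coeff q (u q))"
proof -
  have "curl_coeff k (convec N u k) =
     (\<Sum>q\<in>box N. sconv u k q * curl_coeff (k - q) (u q)) + (\<Sum>q\<in>box N. sconv u k q * curl_coeff q (u q))"
    unfolding conv_curl_raw sum.distrib[symmetric]
  proof (rule sum.cong[OF refl])
    fix q
    show "sconv u k q * curl_coeff k (u q) = sconv u k q * curl_coeff (k - q) (u q) + sconv u k q * curl_coeff q (u q)"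
      by (subst curl_split[of k "u q" q]) (simp add: ring_distribs)
  qed
  then show ?thesis using conv_cancel[OF supp div] by simp
qed



lemma lagrange_r:
  fixes a1 a2 :: complex and p1 p2 :: real
  shows "(cmod (of_real p1 * a2 - of_real p2 * a1))^2 + (cmod (of_real p1 * a1 + of_real p2 * a2))^2
         = (p1 ^ 2 + p2 ^ 2) * ((cmod a1)^2 + (cmod a2)^2)"
proof -
  have "(cmod (of_real p1 * a2 - of_real p2 * a1))^2 + (cmod (of_real p1 * a1 + of_real p2 * a2))^2
     = (p1 * Re a2 - p2 * Re a1)^2 + (p1 * Im a2 - p2 * Im a1)^2 + ((p1 * Re a1 + p2 * Re a2)^2 + (p1 * Im a1 + p2 * Im a2)^2)"
    unfolding cmod_power2 by simp
  also have "\<dots> = (p1 ^ 2 + p2 ^ 2) * (((Re a1)^2 + (Im a1)^2) + ((Re a2)^2 + (Im a2)^2))"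
    by algebra
  finally show ?thesis unfolding cmod_power2 .
qed

lemma lagrange:
  fixes a1 a2 :: complex and p1 p2 :: int
  shows "(cmod (of_int p1 * a2 - of_int p2 * a1))^2 + (cmod (of_int p1 * a1 + of_int p2 * a2))^2
         = (real_of_int p1 ^ 2 + real_of_int p2 ^ 2) * ((cmod a1)^2 + (cmod a2)^2)"
  using lagrange_r[of "real_of_int p1" a2 "real_of_int p2" a1] unfolding of_real_of_int_eq .

lemma knorm_sq: "(knorm k)^2 = (real_of_int (fst k))^2 + (real_of_int (snd k))^2"
  unfolding knorm_def by simp

lemma vnorm_sq: "(vnorm v)^2 = (cmod (fst v))^2 + (cmod (snd v))^2"
  unfolding vnorm_def by simp

lemma knorm_nonneg: "knorm k \<ge> 0" unfolding knorm_def by simp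
lemma vnorm_nonneg: "vnorm v \<ge> 0" unfolding vnorm_def by simp

lemma curl_norm:
  assumes "of_int (fst k) * fst v + of_int (snd k) * snd v = 0"
  shows "cmod (curl_coeff k v) = knorm k * vnorm v"
proof -
  have c: "cmod (curl_coeff k v) = cmod (of_int (fst k) * snd v - of_int (snd k) * fst v)"
    unfolding curl_coeff_def norm_mult by simp
  have L: "(cmod (of_int (fst k) * snd v - of_int (snd k) * fst v))^2 + 0
      = (knorm k)^2 * (vnorm v)^2"
    using lagrange[of "fst k" "snd v" "snd k" "fst v"] assms unfolding knorm_sq vnorm_sq by simp
  have "(cmod (curl_coeff k v))^2 = (knorm k * vnorm v)^2"
    using L c by (simp add: power_mult_distrib)
  moreover have "0 \<le> knorm k * vnorm v"
    using knorm_nonneg vnorm_nonneg by (rule mult_nonneg_nonneg)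
  ultimately show ?thesis by (metis power2_eq_imp_eq norm_ge_zero)
qed

lemma sconv_le: "cmod (sconv u k q) \<le> knorm q * vnorm (u (k - q))"
proof -
  let ?a = "u (k - q)"
  have s: "sconv u k q = \<i> * (of_int (fst q) * fst ?a + of_int (snd q) * snd ?a)"
    unfolding sconv_def by (simp add: algebra_simps)
  have c: "cmod (sconv u k q) = cmod (of_int (fst q) * fst ?a + of_int (snd q) * snd ?a)"
    unfolding s norm_mult by simp
  have L: "(cmod (of_int (fst q) * snd ?a - of_int (snd q) * fst ?a))^2 + (cmod (of_int (fst q) * fst ?a + of_int (snd q) * snd ?a))^2 = (knorm q)^2 * (vnorm ?a)^2"
    using lagrange[of "fst q" "snd ?a" "snd q" "fst ?a"] unfolding knorm_sq vnorm_sq .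
  have "(cmod (sconv u k q))^2 \<le> (knorm q * vnorm ?a)^2"
    unfolding c power_mult_distrib using L zero_le_power2[of "cmod (of_int (fst q) * snd ?a - of_int (snd q) * fst ?a)"] by linarith
  moreover have "0 \<le> knorm q * vnorm ?a"
    using knorm_nonneg vnorm_nonneg by (rule mult_nonneg_nonneg)
  ultimately show ?thesis by (rule power2_le_imp_le)
qed





lemma knorm_pos: "k \<noteq> 0 \<Longrightarrow> knorm k > 0"
  unfolding knorm_def by (cases k) (auto simp: sum_power2_gt_zero_iff zero_prod_def)

lemma knorm_triangle: "knorm (a + b) \<le> knorm a + knorm b"
proof -
  have kn: "knorm k = norm (real_of_int (fst k), real_of_int (snd k))" for k
    unfolding knorm_def norm_Pair by simp
  have "(real_of_int (fst (a+b)), real_of_int (snd (a+b))) =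
        (real_of_int (fst a), real_of_int (snd a)) + (real_of_int (fst b), real_of_int (snd b))"
    by simp
  then show ?thesis unfolding kn by (metis norm_triangle_ineq)
qed

lemma sum_shift_le:
  fixes g :: "'b \<Rightarrow> real"
  assumes "finite A" "finite C" "inj_on f A" "\<And>p. g p \<ge> 0"
    and "\<And>x. x \<in> A \<Longrightarrow> f x \<notin> C \<Longrightarrow> g (f x) = 0"
  shows "(\<Sum>x\<in>A. g (f x)) \<le> sum g C"
proof -
  have "(\<Sum>x\<in>A. g (f x)) = sum g (f ` A)"
    using assms(3) by (simp add: sum.reindex)
  also have "\<dots> = sum g (f ` A \<inter> C)"
    by (rule sum.mono_neutral_right) (use assms in auto)
  also have "\<dots> \<le> sum g C"
    by (rule sum_mono2) (use assms in auto)
  finally show ?thesis .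
qed

lemma box_diff: "k \<in> box N \<Longrightarrow> q \<in> box N \<Longrightarrow> k - q \<in> box (2*N)"
  unfolding box_def by auto





lemma nl_bound:
  fixes u :: "int \<times> int \<Rightarrow> complex \<times> complex" and \<tau> :: real
  assumes supp: "\<And>k. k = 0 \<or> k \<notin> box N \<Longrightarrow> u k = 0"
    and div: "\<And>k. of_int (fst k) * fst (u k) + of_int (snd k) * snd (u k) = 0"
    and tau: "\<tau> \<ge> 0"
  shows "(cmod (\<Sum>k\<in>box N. of_real ((exp (\<tau> * knorm k))^2) * cnj (curl_coeff k (u k)) * curl_coeff k (convec N u k)))^2
     \<le> ((\<Sum>k\<in>box N. (exp (\<tau> * knorm k) * cmod (curl_coeff k (u k)))^2))^2 *
       ((\<Sum>k\<in>box N. (knorm k)^2 * (exp (\<tau> * knorm k) * cmod (curl_coeff k (u k)))^2) *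
        (\<Sum>p\<in>box (2*N). (if p = 0 then 0 else 1 / knorm p)^2))"
proof -
  define e where "e k = exp (\<tau> * knorm k)" for k
  define om where "om k = curl_coeff k (u k)" for k
  define W where "W k = e k * cmod (om k)" for k
  define h where "h p = (if p = 0 then 0 else 1 / knorm p)" for p :: "int \<times> int"
  define B where "B = box N"
  define Y where "Y = (\<Sum>k\<in>B. (W k)^2)"
  define G where "G = (\<Sum>k\<in>B. (knorm k)^2 * (W k)^2)"
  define S where "S = (\<Sum>p\<in>box (2*N). (h p)^2)"
  have fB: "finite B" unfolding B_def by (rule finite_box)
  have supp': "u k = 0" if "k \<notin> B" for k using supp that by (auto simp: B_def)
  have W0: "W k = 0" if "k \<notin> B" for k
    using supp'[OF that] by (simp add: W_def om_def curl_coeff_def)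
  have Wnn: "W k \<ge> 0" for k by (simp add: W_def e_def)
  have hnn: "h p \<ge> 0" for p using knorm_nonneg[of p] by (simp add: h_def)
  have vn: "vnorm (u p) = h p * cmod (om p)" for p
  proof (cases "p = 0")
    case True
    then show ?thesis using supp[of p] by (simp add: h_def vnorm_def)
  next
    case False
    have "cmod (om p) = knorm p * vnorm (u p)"
      unfolding om_def by (rule curl_norm[OF div])
    then show ?thesis using knorm_pos[OF False] False by (simp add: h_def)
  qed
  have ew: "e k \<le> e (k - q) * e q" for k q
  proof -
    have "knorm k \<le> knorm (k - q) + knorm q"
      using knorm_triangle[of "k - q" q] by simp
    then have "\<tau> * knorm k \<le> \<tau> * knorm (k - q) + \<tau> * knorm q"
      using tau by (metis distrib_left mult_left_mono)
    then show ?thesis by (simp add: e_def exp_add[symmetric])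
  qed
  have enn: "e k \<ge> 0" for k by (simp add: e_def)
  have trm: "cmod (of_real ((e k)^2) * cnj (om k) * (sconv u k q * om q))
      \<le> (W k * W (k - q)) * (knorm q * W q * h (k - q))" for k q
  proof -
    have "cmod (of_real ((e k)^2) * cnj (om k) * (sconv u k q * om q))
        = (e k)^2 * cmod (om k) * cmod (sconv u k q) * cmod (om q)"
      using enn[of k] by (simp add: norm_mult norm_power del: of_real_power)
    also have "\<dots> \<le> (e k)^2 * cmod (om k) * (knorm q * (h (k - q) * cmod (om (k - q)))) * cmod (om q)"
      using sconv_le[of u k q] unfolding vn by (intro mult_right_mono mult_left_mono) auto
    also have "\<dots> \<le> (e k * (e (k - q) * e q)) * cmod (om k) * (knorm q * (h (k - q) * cmod (om (k - q)))) * cmod (om q)"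
    proof -
      have "(e k)^2 \<le> e k * (e (k - q) * e q)"
        unfolding power2_eq_square using ew[of k q] enn[of k] by (rule mult_left_mono)
      then show ?thesis
        using knorm_nonneg[of q] hnn[of "k - q"]
        by (intro mult_right_mono) auto
    qed
    also have "\<dots> = (W k * W (k - q)) * (knorm q * W q * h (k - q))"
      by (simp add: W_def algebra_simps)
    finally show ?thesis .
  qed
  define a where "a x = W (fst x) * W (fst x - snd x)" for x :: "(int \<times> int) \<times> (int \<times> int)"
  define b where "b x = knorm (snd x) * W (snd x) * h (fst x - snd x)" for x :: "(int \<times> int) \<times> (int \<times> int)"
  have sum_eq: "(\<Sum>k\<in>box N. of_real ((exp (\<tau> * knorm k))^2) * cnj (curl_coeff k (u k)) * curl_coeff k (convec N u k))
      = (\<Sum>k\<in>B. \<Sum>q\<in>B. of_real ((e k)^2) * cnj (om k) * (sconv u k q * om q))"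
  proof (rule sum.cong)
    show "box N = B" by (simp add: B_def)
  next
    fix k assume "k \<in> B"
    have "curl_coeff k (convec N u k) = (\<Sum>q\<in>B. sconv u k q * om q)"
      unfolding om_def B_def by (rule conv_curl) (use supp div in auto)
    then show "of_real ((exp (\<tau> * knorm k))^2) * cnj (curl_coeff k (u k)) * curl_coeff k (convec N u k)
        = (\<Sum>q\<in>B. of_real ((e k)^2) * cnj (om k) * (sconv u k q * om q))"
      by (simp add: sum_distrib_left e_def om_def)
  qed
  have step1: "cmod (\<Sum>k\<in>B. \<Sum>q\<in>B. of_real ((e k)^2) * cnj (om k) * (sconv u k q * om q))
      \<le> (\<Sum>x\<in>B \<times> B. a x * b x)"
  proof -
    have "cmod (\<Sum>k\<in>B. \<Sum>q\<in>B. of_real ((e k)^2) * cnj (om k) * (sconv u k q * om q))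
        \<le> (\<Sum>k\<in>B. cmod (\<Sum>q\<in>B. of_real ((e k)^2) * cnj (om k) * (sconv u k q * om q)))"
      by (rule norm_sum)
    also have "\<dots> \<le> (\<Sum>k\<in>B. \<Sum>q\<in>B. cmod (of_real ((e k)^2) * cnj (om k) * (sconv u k q * om q)))"
      by (intro sum_mono norm_sum)
    also have "\<dots> \<le> (\<Sum>k\<in>B. \<Sum>q\<in>B. (W k * W (k - q)) * (knorm q * W q * h (k - q)))"
      by (intro sum_mono trm)
    also have "\<dots> = (\<Sum>x\<in>B \<times> B. a x * b x)"
      unfolding sum.cartesian_product by (simp add: a_def b_def case_prod_beta)
    finally show ?thesis .
  qed
  have abnn: "0 \<le> (\<Sum>x\<in>B \<times> B. a x * b x)"
    using Wnn hnn knorm_nonneg by (intro sum_nonneg) (simp add: a_def b_def)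
  have CS: "(\<Sum>x\<in>B \<times> B. a x * b x)^2 \<le> (\<Sum>x\<in>B \<times> B. (a x)^2) * (\<Sum>x\<in>B \<times> B. (b x)^2)"
    by (rule Cauchy_Schwarz_ineq_sum)
  have A: "(\<Sum>x\<in>B \<times> B. (a x)^2) \<le> Y^2"
  proof -
    have "(\<Sum>x\<in>B \<times> B. (a x)^2) = (\<Sum>k\<in>B. (W k)^2 * (\<Sum>q\<in>B. (W (k - q))^2))"
      by (simp add: sum.cartesian_product case_prod_beta a_def power_mult_distrib sum_distrib_left)
    also have "\<dots> \<le> (\<Sum>k\<in>B. (W k)^2 * Y)"
    proof (intro sum_mono mult_left_mono)
      fix k assume "k \<in> B"
      show "(\<Sum>q\<in>B. (W (k - q))^2) \<le> Y"
        unfolding Y_def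
        by (rule sum_shift_le[where f="\<lambda>q. k - q" and g="\<lambda>p. (W p)^2"]) (auto simp: fB inj_on_def W0)
    qed simp
    also have "\<dots> = Y^2" by (simp add: Y_def sum_distrib_right power2_eq_square)
    finally show ?thesis .
  qed
  have Bb: "(\<Sum>x\<in>B \<times> B. (b x)^2) \<le> G * S"
  proof -
    have "(\<Sum>x\<in>B \<times> B. (b x)^2) = (\<Sum>k\<in>B. \<Sum>q\<in>B. (knorm q)^2 * (W q)^2 * (h (k - q))^2)"
      by (simp add: sum.cartesian_product case_prod_beta b_def power_mult_distrib)
    also have "\<dots> = (\<Sum>q\<in>B. (knorm q)^2 * (W q)^2 * (\<Sum>k\<in>B. (h (k - q))^2))"
      by (subst sum.swap) (simp add: sum_distrib_left)
    also have "\<dots> \<le> (\<Sum>q\<in>B. (knorm q)^2 * (W q)^2 * S)"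
    proof (intro sum_mono mult_left_mono)
      fix q assume q: "q \<in> B"
      show "(\<Sum>k\<in>B. (h (k - q))^2) \<le> S"
        unfolding S_def
        by (rule sum_shift_le[where f="\<lambda>k. k - q" and g="\<lambda>p. (h p)^2"])
           (use q box_diff in \<open>auto simp: fB finite_box inj_on_def B_def\<close>)
    qed simp
    also have "\<dots> = G * S" by (simp add: G_def sum_distrib_right)
    finally show ?thesis .
  qed
  have "(cmod (\<Sum>k\<in>box N. of_real ((exp (\<tau> * knorm k))^2) * cnj (curl_coeff k (u k)) * curl_coeff k (convec N u k)))^2
      \<le> (\<Sum>x\<in>B \<times> B. a x * b x)^2"
    unfolding sum_eq using step1 by (intro power_mono) auto
  also have "\<dots> \<le> Y^2 * (G * S)"
    using CS A Bb by (meson mult_mono order_trans zero_le_power2 sum_nonneg order.trans)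
  finally show ?thesis
    by (simp add: Y_def G_def S_def W_def e_def om_def h_def B_def)
qed



lemma curl_blin: "bounded_linear (curl_coeff k)"
  unfolding curl_coeff_def
  by (intro bounded_linear_intros bounded_linear_fst bounded_linear_snd)

lemma curl_deriv:
  "(f has_vector_derivative f') F \<Longrightarrow> ((\<lambda>s. curl_coeff k (f s)) has_vector_derivative curl_coeff k f') F"
  by (rule bounded_linear.has_vector_derivative[OF curl_blin])

lemma cmod2_deriv:
  assumes "(f has_vector_derivative f') (at t within S)"
  shows "((\<lambda>s. (cmod (f s))^2) has_real_derivative 2 * Re (cnj (f t) * f')) (at t within S)"
proof -
  have "((\<lambda>s. (Re (f s))^2 + (Im (f s))^2) has_real_derivative
          (2 * Re (f t) * Re f' + 2 * Im (f t) * Im f')) (at t within S)"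
    using assms by (auto intro!: derivative_eq_intros)
  then show ?thesis unfolding cmod_power2 by (simp add: algebra_simps)
qed

lemma exp2_deriv:
  "((\<lambda>s. (exp (al * s * c))^2) has_real_derivative (2 * al * c * (exp (al * t * c))^2)) (at t within S)"
  by (auto intro!: derivative_eq_intros simp: power2_eq_square algebra_simps)

lemma curl_Dv:
  "curl_coeff k (- x - (\<i> * of_int (fst k) * p, \<i> * of_int (snd k) * p) + (c * fst y, c * snd y))
   = - curl_coeff k x + c * curl_coeff k y"
  by (simp add: curl_coeff_def algebra_simps)

lemma lin_bound:
  fixes x eps alpha m r :: real
  assumes eps: "eps > 0" and x: "x \<ge> 0" and r: "0 \<le> r" "r \<le> 1" and hi: "x > 2 * m \<Longrightarrow> r = 0"
    and m: "m > 0"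
  shows "2 * alpha * x + 2 * (- eps * x^2 * (1 - r)) + eps * x^2 \<le> (alpha^2 + 8 * eps^2 * m^2) / eps"
proof -
  have e1: "(alpha - eps * x)^2 / eps = alpha^2 / eps - 2 * alpha * x + eps * x^2"
    using eps by (simp add: field_simps power2_eq_square)
  have "(alpha - eps * x)^2 / eps \<ge> 0" using eps by simp
  then have q1: "2 * alpha * x - eps * x^2 \<le> alpha^2 / eps" using e1 by linarith
  have q2: "eps * x^2 * r \<le> 4 * eps * m^2"
  proof (cases "x > 2 * m")
    case True then show ?thesis using hi eps m by simp
  next
    case False
    then have "x^2 \<le> (2*m)^2" using x by (intro power_mono) auto
    then have "x^2 * r \<le> (2*m)^2" using r by (metis mult_left_le order_trans zero_le_power2)
    then have "eps * (x^2 * r) \<le> eps * (2*m)^2" using eps by (intro mult_left_mono) auto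
    then show ?thesis by (simp add: power2_eq_square algebra_simps)
  qed
  have e2: "(alpha^2 + 8 * eps^2 * m^2) / eps = alpha^2 / eps + 8 * eps * m^2"
    using eps by (simp add: field_simps power2_eq_square)
  show ?thesis using q1 q2 e2 by (simp add: algebra_simps)
qed

lemma amgm_nl:
  fixes Z Y G S eps :: real
  assumes "Z \<ge> 0" "Y \<ge> 0" "G \<ge> 0" "S \<ge> 0" "eps > 0"
    and "Z^2 \<le> Y^2 * (G * S)"
  shows "2 * Z \<le> eps * G + S * Y^2 / eps"
proof -
  have "(2 * Z)^2 \<le> 4 * (Y^2 * (G * S))" using assms(6) by (simp add: power_mult_distrib)
  also have "\<dots> \<le> (eps * G + S * Y^2 / eps)^2"
  proof -
    have "(eps * G + S * Y^2 / eps)^2 - 4 * (Y^2 * (G * S)) = (eps * G - S * Y^2 / eps)^2"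
      using assms(5) by (simp add: field_simps power2_eq_square)
    then show ?thesis using zero_le_power2[of "eps * G - S * Y^2 / eps"] by linarith
  qed
  finally have sq: "(2 * Z)^2 \<le> (eps * G + S * Y^2 / eps)^2" .
  have n1: "0 \<le> eps * G" using assms(3,5) by simp
  have n2: "0 \<le> S * Y^2 / eps" using assms(4,5) by simp
  have nn: "0 \<le> eps * G + S * Y^2 / eps" using n1 n2 by linarith
  show ?thesis by (rule power2_le_imp_le[OF sq nn])
qed

lemma S_bound:
  fixes C :: real and N :: nat
  assumes N: "N \<ge> 2"
    and C_bound: "\<forall>M::nat. M \<ge> 2 \<longrightarrow>
        (\<Sum>k\<in>{k\<in>box M. 0 < knorm k \<and> knorm k \<le> real M}. 1 / (knorm k)\<^sup>2) \<le> C * ln (real M)"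
    and C: "C > 0"
  shows "(\<Sum>p\<in>box (2*N). (if p = 0 then 0 else 1 / knorm p)^2) \<le> 4 * pi^2 * (C * ln (real N))"
proof -
  let ?T = "{k\<in>box (3*N). 0 < knorm k \<and> knorm k \<le> real (3*N)}"
  have "(\<Sum>p\<in>box (2*N). (if p = 0 then 0 else 1 / knorm p)^2) = (\<Sum>p\<in>box (2*N) - {0}. 1 / (knorm p)^2)"
    by (rule sum.mono_neutral_cong_right) (auto simp: finite_box power_one_over)
  also have "\<dots> \<le> (\<Sum>k\<in>?T. 1 / (knorm k)^2)"
  proof (rule sum_mono2)
    show "finite ?T" using finite_box by simp
    show "box (2*N) - {0} \<subseteq> ?T"
    proof
      fix p assume p: "p \<in> box (2*N) - {0}"
      then have pb: "\<bar>fst p\<bar> \<le> 2 * int N" "\<bar>snd p\<bar> \<le> 2 * int N" by (auto simp: box_def)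
      have sqb: "(real_of_int z)^2 \<le> (2 * real N)^2" if "\<bar>z\<bar> \<le> 2 * int N" for z
      proof -
        have "real_of_int \<bar>z\<bar> \<le> real_of_int (2 * int N)" using that by (simp only: of_int_le_iff)
        then have "\<bar>real_of_int z\<bar> \<le> 2 * real N" by simp
        then have "\<bar>real_of_int z\<bar>^2 \<le> (2 * real N)^2" by (rule power_mono) simp
        then show ?thesis by simp
      qed
      have "(real_of_int (fst p))^2 \<le> (2 * real N)^2" using sqb pb(1) by blast
      moreover have "(real_of_int (snd p))^2 \<le> (2 * real N)^2" using sqb pb(2) by blast
      moreover have "(real (3*N))^2 = 9 * (real N)^2" by (simp add: power_mult_distrib)
      moreover have "(2 * real N)^2 = 4 * (real N)^2" by (simp add: power_mult_distrib)
      moreover have "0 \<le> (real N)^2" by simp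
      ultimately have "(knorm p)^2 \<le> (real (3*N))^2"
        unfolding knorm_sq by linarith
      moreover have "0 \<le> real (3*N)" by simp
      ultimately have "knorm p \<le> real (3*N)"
        by (rule power2_le_imp_le)
      moreover have "p \<in> box (3*N)" using p by (auto simp: box_def)
      moreover have "knorm p > 0" using p knorm_pos by auto
      ultimately show "p \<in> ?T" by simp
    qed
  qed simp
  also have "\<dots> \<le> C * ln (real (3*N))" using C_bound[rule_format, of "3*N"] N by linarith
  also have "\<dots> \<le> 4 * pi^2 * (C * ln (real N))"
  proof -
    have lnN: "ln (real N) \<ge> ln 2" using N by simp
    have l4: "ln (4::real) = 2 * ln 2"
      using ln_realpow[of 2 2] by simp
    have l3: "ln (3::real) \<le> ln 4" by simp
    have "ln (real (3*N)) = ln 3 + ln (real N)" using N by (simp add: ln_mult)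
    then have "ln (real (3*N)) \<le> 3 * ln (real N)" using l3 l4 lnN by linarith
    also have "3 * ln (real N) \<le> 4 * pi^2 * ln (real N)"
    proof -
      have "3 * 3 \<le> pi * pi" using pi_gt3 by (intro mult_mono) auto
      then have "(3::real) \<le> 4 * pi^2" by (simp add: power2_eq_square)
      moreover have "ln (real N) \<ge> 0" using N by simp
      ultimately show ?thesis by (intro mult_right_mono)
    qed
    finally have "C * ln (real (3*N)) \<le> C * (4 * pi^2 * ln (real N))"
      using C by (intro mult_left_mono) auto
    then show ?thesis by (metis mult.left_commute)
  qed
  finally show ?thesis .
qed



lemma re_helper1: "Re (cnj z * (- w + of_real r * z)) = r * (cmod z)^2 - Re (cnj z * w)"
proof -
  have "cnj z * (- w + of_real r * z) = of_real (r * (cmod z)^2) - cnj z * w"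
    by (simp only: of_real_mult complex_norm_square) (simp add: algebra_simps)
  then show ?thesis by simp
qed

lemma re_helper2: "Re (of_real a * w) = a * Re w"
  by simp

lemma re_helper3: "Re (of_real a * x * y) = a * Re (x * y)"
  by (simp only: mult.assoc re_helper2)

theorem mainTheorem3:
  fixes N a :: nat and eps m alpha C :: real
    and Rh :: "int \<times> int \<Rightarrow> real" and Kt :: "int \<times> int \<Rightarrow> complex"
    and u0 :: "real \<times> real \<Rightarrow> real \<times> real"
    and uh :: "real \<Rightarrow> int \<times> int \<Rightarrow> complex \<times> complex"
  assumes N: "N \<ge> 2"
    and eps: "eps > 0" and m: "m > 0" and a: "1 \<le> a" "a \<le> N"
    and Rh_range: "\<forall>k. 0 \<le> Rh k \<and> Rh k \<le> 1"
    and Rh_low: "\<forall>k. knorm k \<le> m \<longrightarrow> Rh k = 1"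
    and Rh_high: "\<forall>k. knorm k > 2 * m \<longrightarrow> Rh k = 0"
    and Kt_supp: "\<forall>k. \<not> (kinf k \<le> int a) \<longrightarrow> Kt k = 0"
    and Kt_bd: "\<forall>k. cmod (Kt k) \<le> 1"
    and u0: "admissible_initial u0"
    and sol: "SV_solution N eps Rh Kt u0 uh"
    and C: "C > 0"
    and C_bound: "\<forall>M::nat. M \<ge> 2 \<longrightarrow>
        (\<Sum>k\<in>{k\<in>box M. 0 < knorm k \<and> knorm k \<le> real M}. 1 / (knorm k)\<^sup>2) \<le> C * ln (real M)"
    and alpha: "alpha > 0"
  shows "let beta = alpha\<^sup>2 + 8 * eps\<^sup>2 * m\<^sup>2;
             gamma = C * ln (real N);
             W0 = L2sq (vorticity N uh 0);
             tstar = eps / beta * ln (1 + beta / (gamma * W0))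
         in \<forall>t. 0 \<le> t \<and> (W0 = 0 \<or> t < tstar) \<longrightarrow>
              L2sq (exp_weighted_vorticity N alpha uh t)
                \<le> W0 * exp (beta * t / eps) /
                   (1 - gamma * W0 / beta * (exp (beta * t / eps) - 1))"
proof -
  define beta where "beta = alpha\<^sup>2 + 8 * eps\<^sup>2 * m\<^sup>2"
  define gamma where "gamma = C * ln (real N)"
  define B where "B = box N"
  define om where "om t k = curl_coeff k (uh t k)" for t k
  define e where "e t k = exp (alpha * t * knorm k)" for t k
  define En where "En t = (\<Sum>k\<in>B. (e t k)^2 * (cmod (om t k))^2)" for t
  define A where "A = beta / eps"
  define b where "b = 4 * pi^2 * gamma / eps"
  have beta_pos: "beta > 0" unfolding beta_def using alpha by (simp add: add_pos_nonneg)
  have gamma_pos: "gamma > 0" unfolding gamma_def using C N by simp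
  have A_pos: "A > 0" using beta_pos eps by (simp add: A_def)
  have b_nn: "b \<ge> 0" using gamma_pos eps by (simp add: b_def)
  from sol have supp: "\<And>t k. t \<ge> 0 \<Longrightarrow> k = 0 \<or> k \<notin> box N \<Longrightarrow> uh t k = 0"
    and div: "\<And>t k. t \<ge> 0 \<Longrightarrow> of_int (fst k) * fst (uh t k) + of_int (snd k) * snd (uh t k) = 0"
    and ex: "\<exists>pr :: real \<Rightarrow> int \<times> int \<Rightarrow> complex.
        (\<forall>t\<ge>0. \<forall>k. pr t (- k) = cnj (pr t k)) \<and>
        (\<forall>t\<ge>0. \<forall>k.
           ((\<lambda>s. uh s k) has_vector_derivative
              (- (if k \<in> box N then convec N (uh t) k else 0)
               - (\<i> * of_int (fst k) * pr t k, \<i> * of_int (snd k) * pr t k)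
               + (of_real (- eps * (knorm k)\<^sup>2 * (1 - Rh k)) * fst (uh t k),
                  of_real (- eps * (knorm k)\<^sup>2 * (1 - Rh k)) * snd (uh t k))))
             (at t within {0..}))"
    unfolding SV_solution_def by blast+
  then obtain pr :: "real \<Rightarrow> int \<times> int \<Rightarrow> complex" where
    dv: "\<And>t k. t \<ge> 0 \<Longrightarrow> ((\<lambda>s. uh s k) has_vector_derivative
              (- (if k \<in> box N then convec N (uh t) k else 0)
               - (\<i> * of_int (fst k) * pr t k, \<i> * of_int (snd k) * pr t k)
               + (of_real (- eps * (knorm k)\<^sup>2 * (1 - Rh k)) * fst (uh t k),
                  of_real (- eps * (knorm k)\<^sup>2 * (1 - Rh k)) * snd (uh t k))))
             (at t within {0..})"
    by blast
  define nu where "nu k = - eps * (knorm k)\<^sup>2 * (1 - Rh k)" for k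
  define om' where "om' t k = - curl_coeff k (convec N (uh t) k) + of_real (nu k) * om t k" for t k
  have dom: "((\<lambda>s. om s k) has_vector_derivative om' t k) (at t within {0..})"
    if "t \<ge> 0" "k \<in> B" for t k
  proof -
    have "((\<lambda>s. curl_coeff k (uh s k)) has_vector_derivative
        curl_coeff k (- (if k \<in> box N then convec N (uh t) k else 0)
               - (\<i> * of_int (fst k) * pr t k, \<i> * of_int (snd k) * pr t k)
               + (of_real (- eps * (knorm k)\<^sup>2 * (1 - Rh k)) * fst (uh t k),
                  of_real (- eps * (knorm k)\<^sup>2 * (1 - Rh k)) * snd (uh t k)))) (at t within {0..})"
      by (rule curl_deriv[OF dv[OF that(1)]])
    moreover have "curl_coeff k (- (if k \<in> box N then convec N (uh t) k else 0)
               - (\<i> * of_int (fst k) * pr t k, \<i> * of_int (snd k) * pr t k)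
               + (of_real (- eps * (knorm k)\<^sup>2 * (1 - Rh k)) * fst (uh t k),
                  of_real (- eps * (knorm k)\<^sup>2 * (1 - Rh k)) * snd (uh t k))) = om' t k"
      using that(2) unfolding om'_def om_def nu_def B_def by (simp only: if_True curl_Dv)
    ultimately show ?thesis unfolding om_def by simp
  qed
  define En' where "En' t = (\<Sum>k\<in>B. 2 * alpha * knorm k * (e t k)^2 * (cmod (om t k))^2
        + (e t k)^2 * (2 * Re (cnj (om t k) * om' t k)))" for t
  have dEn: "(En has_real_derivative En' t) (at t within {0..})" if t: "t \<ge> 0" for t
  proof -
    have "((\<lambda>s. (e s k)^2 * (cmod (om s k))^2) has_real_derivative
        2 * alpha * knorm k * (e t k)^2 * (cmod (om t k))^2 + (e t k)^2 * (2 * Re (cnj (om t k) * om' t k)))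
        (at t within {0..})" if k: "k \<in> B" for k
    proof -
      have h3: "((\<lambda>s. (e s k)^2) has_real_derivative (2 * alpha * knorm k * (e t k)^2)) (at t within {0..})"
        unfolding e_def by (rule exp2_deriv)
      have h2: "((\<lambda>s. (cmod (om s k))^2) has_real_derivative 2 * Re (cnj (om t k) * om' t k)) (at t within {0..})"
        by (rule cmod2_deriv[OF dom[OF t k]])
      show ?thesis
        by (rule DERIV_cong[OF DERIV_mult'[OF h3 h2]]) (simp add: algebra_simps)
    qed
    then have "((\<lambda>s. \<Sum>k\<in>B. (e s k)^2 * (cmod (om s k))^2) has_real_derivative En' t) (at t within {0..})"
      unfolding En'_def by (rule DERIV_sum)
    then show ?thesis unfolding En_def[abs_def] .
  qed
  have bound: "En' t \<le> A * En t + b * (En t)^2" if t: "t \<ge> 0" for t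
  proof -
    define NL where "NL = (\<Sum>k\<in>B. of_real ((e t k)^2) * cnj (om t k) * curl_coeff k (convec N (uh t) k))"
    define G where "G = (\<Sum>k\<in>B. (knorm k)^2 * (e t k * cmod (om t k))^2)"
    define S where "S = (\<Sum>p\<in>box (2*N). (if p = 0 then 0 else 1 / knorm p)^2)"
    have Y: "En t = (\<Sum>k\<in>B. (e t k * cmod (om t k))^2)"
      unfolding En_def by (simp add: power_mult_distrib)
    have nl: "(cmod NL)^2 \<le> (En t)^2 * (G * S)"
      unfolding Y NL_def G_def S_def B_def e_def om_def
      using nl_bound[of N "uh t" "alpha * t"] supp[OF t] div[OF t] t alpha
      by (simp add: mult.assoc)
    have Gnn: "G \<ge> 0" unfolding G_def by (intro sum_nonneg) simp
    have Snn: "S \<ge> 0" unfolding S_def by (intro sum_nonneg) simp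
    have Ynn: "En t \<ge> 0" unfolding En_def by (intro sum_nonneg) simp
    have am: "2 * cmod NL \<le> eps * G + S * (En t)^2 / eps"
      by (rule amgm_nl[OF norm_ge_zero Ynn Gnn Snn eps nl])
    have Sb: "S \<le> 4 * pi^2 * gamma"
      unfolding S_def gamma_def by (rule S_bound[OF N C_bound C])
    have Sb2: "S * (En t)^2 / eps \<le> b * (En t)^2"
    proof -
      have "S * (En t)^2 \<le> (4 * pi^2 * gamma) * (En t)^2"
        using Sb by (intro mult_right_mono) simp_all
      then show ?thesis unfolding b_def using eps by (simp add: divide_right_mono)
    qed
    have eq: "En' t = (\<Sum>k\<in>B. (2 * alpha * knorm k + 2 * nu k) * ((e t k)^2 * (cmod (om t k))^2)) - 2 * Re NL"
      unfolding En'_def NL_def Re_sum sum_distrib_left sum_subtractf[symmetric]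
      by (rule sum.cong[OF refl]) (simp only: om'_def re_helper1 re_helper3, simp add: algebra_simps)
    have lin: "(\<Sum>k\<in>B. (2 * alpha * knorm k + 2 * nu k) * ((e t k)^2 * (cmod (om t k))^2)) + eps * G
        \<le> A * En t"
    proof -
      have "(\<Sum>k\<in>B. (2 * alpha * knorm k + 2 * nu k) * ((e t k)^2 * (cmod (om t k))^2)) + eps * G
          = (\<Sum>k\<in>B. (2 * alpha * knorm k + 2 * nu k + eps * (knorm k)^2) * (e t k * cmod (om t k))^2)"
        unfolding G_def sum_distrib_left sum.distrib[symmetric]
        by (rule sum.cong[OF refl]) (simp add: power_mult_distrib algebra_simps)
      also have "\<dots> \<le> (\<Sum>k\<in>B. A * (e t k * cmod (om t k))^2)"
      proof (rule sum_mono)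
        fix k assume "k \<in> B"
        have "2 * alpha * knorm k + 2 * nu k + eps * (knorm k)^2 \<le> A"
          unfolding nu_def A_def beta_def
        proof (rule lin_bound[where x="knorm k" and eps=eps and alpha=alpha and m=m and r="Rh k"])
          show "0 \<le> Rh k" "Rh k \<le> 1" using Rh_range[rule_format, of k] by simp_all
          show "knorm k > 2 * m \<Longrightarrow> Rh k = 0" using Rh_high[rule_format, of k] by simp
        qed (use eps m knorm_nonneg in auto)
        then show "(2 * alpha * knorm k + 2 * nu k + eps * (knorm k)^2) * (e t k * cmod (om t k))^2
            \<le> A * (e t k * cmod (om t k))^2"
          by (rule mult_right_mono) simp
      qed
      also have "\<dots> = A * En t" unfolding Y by (simp add: sum_distrib_left)
      finally show ?thesis .
    qed
    have "- (2 * Re NL) \<le> 2 * cmod NL" using complex_Re_le_cmod[of "- NL"] by simp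
    then show ?thesis using eq lin am Sb2 by linarith
  qed
  have Enn: "En t \<ge> 0" for t unfolding En_def by (intro sum_nonneg) simp
  have L2t: "L2sq (exp_weighted_vorticity N alpha uh t) = 4 * pi^2 * En t" for t
  proof -
    have "L2sq (exp_weighted_vorticity N alpha uh t) =
        4 * pi^2 * (\<Sum>k\<in>box N. (cmod (of_real (exp (alpha * t * knorm k)) * curl_coeff k (uh t k)))^2)"
      unfolding exp_weighted_vorticity_def by (rule L2sq_trigpoly)
    also have "\<dots> = 4 * pi^2 * En t"
      unfolding En_def B_def e_def om_def by (simp add: norm_mult power_mult_distrib)
    finally show ?thesis .
  qed
  define W0 where "W0 = L2sq (vorticity N uh 0)"
  have W0E: "W0 = 4 * pi^2 * En 0"
  proof -
    have "W0 = 4 * pi^2 * (\<Sum>k\<in>box N. (cmod (curl_coeff k (uh 0 k)))^2)"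
      unfolding W0_def vorticity_def by (rule L2sq_trigpoly)
    also have "\<dots> = 4 * pi^2 * En 0"
      unfolding En_def B_def e_def om_def by simp
    finally show ?thesis .
  qed
  have W0nn: "W0 \<ge> 0" using W0E Enn[of 0] by simp
  have main: "L2sq (exp_weighted_vorticity N alpha uh t)
        \<le> W0 * exp (beta * t / eps) / (1 - gamma * W0 / beta * (exp (beta * t / eps) - 1))"
    if t: "0 \<le> t" and tc: "W0 = 0 \<or> t < eps / beta * ln (1 + beta / (gamma * W0))" for t
  proof -
    define DD where "DD = 1 - gamma * W0 / beta * (exp (beta * t / eps) - 1)"
    have At: "A * t = beta * t / eps" by (simp add: A_def)
    have bA: "b / A * En 0 = gamma * W0 / beta"
      using eps beta_pos unfolding b_def A_def W0E by (simp add: field_simps)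
    have ric: "En t * (1 - b / A * En 0 * (exp (A * t) - 1)) \<le> En 0 * exp (A * t)"
      by (rule riccati_comp[OF dEn bound Enn A_pos b_nn t])
    then have "En t * DD \<le> En 0 * exp (beta * t / eps)"
      unfolding DD_def bA At[symmetric] .
    then have ineq: "L2sq (exp_weighted_vorticity N alpha uh t) * DD \<le> W0 * exp (beta * t / eps)"
      unfolding L2t W0E using pi_gt_zero
      by (metis (no_types, opaque_lifting) mult.assoc mult_left_mono zero_le_power2 mult_nonneg_nonneg
          zero_le_numeral)
    have Dpos: "DD > 0"
      using tc
    proof
      assume "W0 = 0" then show ?thesis by (simp add: DD_def)
    next
      assume tl: "t < eps / beta * ln (1 + beta / (gamma * W0))"
      show ?thesis
      proof (cases "W0 = 0")
        case True then show ?thesis by (simp add: DD_def)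
      next
        case False
        then have W0p: "W0 > 0" using W0nn by simp
        have gw: "gamma * W0 > 0" using gamma_pos W0p by simp
        have "beta * t / eps < ln (1 + beta / (gamma * W0))"
          using tl eps beta_pos by (simp add: field_simps)
        then have "exp (beta * t / eps) < 1 + beta / (gamma * W0)"
          using gw beta_pos by (metis exp_less_cancel_iff exp_ln add_pos_pos zero_less_one divide_pos_pos)
        then have "exp (beta * t / eps) - 1 < beta / (gamma * W0)" by simp
        then have "gamma * W0 / beta * (exp (beta * t / eps) - 1) < gamma * W0 / beta * (beta / (gamma * W0))"
          using gw beta_pos by (intro mult_strict_left_mono) auto
        also have "\<dots> = 1" using gamma_pos W0p beta_pos by simp
        finally show ?thesis by (simp add: DD_def)
      qed
    qed
    show ?thesis
      using ineq Dpos unfolding DD_def[symmetric] by (simp add: pos_le_divide_eq)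
  qed
  show ?thesis
    unfolding Let_def beta_def[symmetric] gamma_def[symmetric] W0_def[symmetric]
    using main by blast
qed


end
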